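(* Let $\vec{m}\in\mathbb{R}^N$ denote a vector of $N$ homodyne measurement outcomes and $\vec{\theta}$ a vector of $N$ homodyne-measurement angles with $\theta_j \in(-\tfrac{\pi}{2},\tfrac{\pi}{2}]$ for all $j$. Let $\hat{B}^{(N)} \to \mathbf{R}$ be a real beam-splitter network, where $\mathbf{R} \in \mathrm{O}(N)$ is neither block diagonal nor a row permutation away from block diagonal. Let $\vec{\theta}'$ be another vector of $N$ measurement angles with $\theta'_i\in(-\tfrac{\pi}{2},\tfrac{\pi}{2}]$, and let $\mathbf{L} \in \mathbb{R}^{N\times N}$ be a real matrix for which there exists a Gaussian unitary $\hat{U}_G$ satisfying $\sqrt{|\det \mathbf{L}^{-1}|}\, {}_{p}\!\langle \mathbf{L}^{-1} \vec{m}| = {}_{p}\!\langle \vec{m}| \hat{U}_G$. Then, given $\vec{\theta}$ and $\hat{B}^{(N)}$, there does not exist a pair $(\vec{\theta}',\mathbf{L})$ such that for all $\vec{m}\in\mathbb{R}^N$, $${}_{p_{\vec{\theta}}}\!\langle \vec{m}|\, \hat{B}^{(N)} = \sqrt{|\det \mathbf{L}^{-1}|}\; {}_{p_{\vec{\theta}'}}\!\langle \mathbf{L}^{-1} \vec{m}|,$$ unless $\vec{\theta}=\theta\vec{1}_N$ (all angles equal), where $\vec{1}_N=(1,\ldots,1)^{\mathsf{T}}$.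
   Context: Modes have quadratures $\hat q=(\hat a+\hat a^\dagger)/\sqrt2$, $\hat p=-i(\hat a-\hat a^\dagger)/\sqrt2$. The rotated quadrature is $\hat p_\theta = \hat R^\dagger(\theta)\hat p\hat R(\theta)=\hat p\cos\theta+\hat q\sin\theta$ with $\hat R(\theta)=e^{i\theta\hat a^\dagger\hat a}$; a homodyne measurement of $\hat p_\theta$ with outcome $m$ is the projection onto the bra ${}_{p_\theta}\!\langle m| = {}_{p}\!\langle m|\hat R(\theta)$, and ${}_{p_{\vec\theta}}\!\langle\vec m|$ denotes the tensor product of such bras over the $N$ modes. For a passive linear-optical unitary, $\hat U\to\mathbf U$ means $\hat U^\dagger\hat{\vec a}\hat U=\mathbf U\hat{\vec a}$ for the vector of annihilation operators. A real beam-splitter network is a product of beam splitters $e^{-\theta(\hat a_j\hat a_k^\dagger-\hat a_j^\dagger\hat a_k)}$, whose matrix is real orthogonal. The determinant factor accounts for the change of measure from linear post-processing of outcomes.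
   Formalization: R is not block diagonal after any permutation of its rows combined with any permutation of its columns, in place of being neither block diagonal nor a row permutation away from block diagonal. The statement above fails without it. *)

theory Defs
  imports "HOL-Analysis.Analysis"
begin

text \<open>Wavefunctions are taken in the p-representation: a (test) ket psi is a function
  real^'n => complex with psi p = <p|_p psi>.  Bras are represented by their action on
  continuous, compactly supported test functions.\<close>

definition test_ket :: "(real^'n \<Rightarrow> complex) \<Rightarrow> bool" where
  "test_ket psi \<longleftrightarrow> continuous_on UNIV psi \<and> bounded {x. psi x \<noteq> 0}"

text \<open>Single-mode kernel <x|_p R(theta) |y>_p for theta not a multiple of pi, with
  R(theta) = exp(i theta a^dagger a): Mehler's formula at z = exp(i theta), principal branch.\<close>

definition homodyne_kernel :: "real \<Rightarrow> real \<Rightarrow> real \<Rightarrow> complex" where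
  "homodyne_kernel \<theta> x y =
     cis (x * y / sin \<theta> - cot \<theta> * (x\<^sup>2 + y\<^sup>2) / 2)
     / (complex_of_real (sqrt pi) * csqrt (1 - cis (2 * \<theta>)))"

text \<open>The tensor-product homodyne bra <m|_{p_theta} applied to a ket psi:
  modes with theta_j = 0 are evaluated at m_j, the others are integrated against the kernel.\<close>

definition homodyne_bra :: "real^'n \<Rightarrow> real^'n \<Rightarrow> (real^'n \<Rightarrow> complex) \<Rightarrow> complex" where
  "homodyne_bra \<theta> m psi =
     (let S = {j. \<theta> $ j \<noteq> 0} in
      integral\<^sup>L (PiM S (\<lambda>_. lborel))
        (\<lambda>y. (\<Prod>j\<in>S. homodyne_kernel (\<theta> $ j) (m $ j) (y j))
              * psi (\<chi> j. if j \<in> S then y j else m $ j)))"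

text \<open>Action of the passive linear-optical unitary B with B^dagger a B = R a (R real orthogonal)
  on p-representation wavefunctions: (B psi)(p) = psi(R^T p).\<close>

definition passive_action :: "real^'n^'n \<Rightarrow> (real^'n \<Rightarrow> complex) \<Rightarrow> (real^'n \<Rightarrow> complex)" where
  "passive_action R psi = (\<lambda>p. psi (transpose R *v p))"

text \<open>R is block diagonal up to relabelling of rows and columns (nontrivial split).\<close>

definition block_decomposable :: "real^'n^'n \<Rightarrow> bool" where
  "block_decomposable R \<longleftrightarrow>
     (\<exists>S T. S \<noteq> {} \<and> S \<noteq> UNIV \<and> T \<noteq> {} \<and> T \<noteq> UNIV \<and>
        (\<forall>i j. (i \<in> T) \<noteq> (j \<in> S) \<longrightarrow> R $ i $ j = 0))"

end

theory Submission
  imports Defs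
begin
definition emb :: "'n set \<Rightarrow> real^'n \<Rightarrow> ('n \<Rightarrow> real) \<Rightarrow> real^'n" where
  "emb S m y = (\<chi> j. if j\<in>S then y j else m$j)"

abbreviation PL :: "'n set \<Rightarrow> ('n \<Rightarrow> real) measure" where "PL S \<equiv> PiM S (\<lambda>_. lborel)"

lemma emb_meas: "emb S (m::real^'n) \<in> borel_measurable (PL S)"
proof (subst borel_measurable_euclidean_space, intro ballI)
  fix b :: "real^'n" assume "b \<in> Basis"
  then obtain i where b: "b = axis i 1" by (auto simp: Basis_vec_def)
  have "(\<lambda>x. emb S m x \<bullet> b) = (\<lambda>x. if i \<in> S then x i else m$i)"
    by (auto simp: b emb_def inner_axis)
  then show "(\<lambda>x. emb S m x \<bullet> b) \<in> borel_measurable (PL S)"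
    by (cases "i \<in> S") (auto intro: measurable_component_singleton)
qed

lemma emb_comp: "j \<in> S \<Longrightarrow> emb S m y $ j = y j" "j \<notin> S \<Longrightarrow> emb S m y $ j = m $ j"
  by (auto simp: emb_def)

lemma emb_integrable:
  fixes G :: "real^'n \<Rightarrow> 'b::{banach, second_countable_topology}"
  assumes cont: "continuous_on UNIV G" and bnd: "bounded {x. G x \<noteq> 0}"
  shows "integrable (PL S) (\<lambda>y. G (emb S m y))"
proof -
  interpret product_sigma_finite "\<lambda>_. lborel" by standard
  obtain r where r: "\<And>x. G x \<noteq> 0 \<Longrightarrow> norm x \<le> r"
    using bnd unfolding bounded_iff by blast
  have "compact (G ` cball 0 r)"
    by (rule compact_continuous_image) (auto intro: continuous_on_subset[OF cont])
  then obtain B where B: "\<And>x. x \<in> cball 0 r \<Longrightarrow> norm (G x) \<le> B"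
  proof -
    have "bounded (G ` cball 0 r)" using \<open>compact (G ` cball 0 r)\<close> by (rule compact_imp_bounded)
    then obtain B where "\<forall>y\<in>G ` cball 0 r. norm y \<le> B" unfolding bounded_iff by blast
    then show ?thesis using that by blast
  qed
  define A where "A = Pi\<^sub>E S (\<lambda>_. {-r..r})"
  have Asets: "A \<in> sets (PL S)"
    unfolding A_def by (rule sets_PiM_I_finite) auto
  have "emeasure (PL S) A = (\<Prod>i\<in>S. emeasure lborel {-r..r})"
    unfolding A_def by (rule emeasure_PiM) auto
  also have "\<dots> < \<infinity>" by (auto simp: less_top[symmetric] ennreal_prod_eq_top emeasure_lborel_Icc_eq ennreal_power power_0_left)
  finally have Afin: "emeasure (PL S) A < \<infinity>" .
  show ?thesis
  proof (rule Bochner_Integration.integrable_bound[where M="PL S" and f="\<lambda>y. B * indicator A y :: real"])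
    show "integrable (PL S) (\<lambda>y. B * indicator A y)"
      using Asets Afin by simp
    show "(\<lambda>y. G (emb S m y)) \<in> borel_measurable (PL S)"
      by (rule measurable_compose[OF emb_meas]) (rule borel_measurable_continuous_onI[OF cont])
    show "AE x in PL S. norm (G (emb S m x)) \<le> norm (B * indicator A x)"
    proof (rule AE_I2)
      fix x assume x: "x \<in> space (PL S)"
      show "norm (G (emb S m x)) \<le> norm (B * indicator A x)"
      proof (cases "G (emb S m x) = 0")
        case False
        then have n: "norm (emb S m x) \<le> r" by (rule r)
        have "x \<in> A"
        proof -
          have "\<bar>x j\<bar> \<le> r" if "j \<in> S" for j
            using component_le_norm_cart[of "emb S m x" j] n that by (simp add: emb_comp)
          then show ?thesis using x unfolding A_def space_PiM by (force simp: PiE_iff abs_le_iff)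
        qed
        moreover have "norm (G (emb S m x)) \<le> B" using B n by auto
        ultimately show ?thesis by auto
      qed simp
    qed
  qed
qed


lemma emb_pos:
  fixes G :: "real^'n \<Rightarrow> real"
  assumes cont: "continuous_on UNIV G" and bnd: "bounded {x. G x \<noteq> 0}"
    and nn: "\<And>x. 0 \<le> G x" and pos: "G (emb S m y0) > 0"
  shows "integral\<^sup>L (PL S) (\<lambda>y. G (emb S m y)) > 0"
proof -
  interpret product_sigma_finite "\<lambda>_. lborel" by standard
  have int: "integrable (PL S) (\<lambda>y. G (emb S m y))"
    by (rule emb_integrable[OF cont bnd])
  have ge: "integral\<^sup>L (PL S) (\<lambda>y. G (emb S m y)) \<ge> 0"
    by (rule integral_nonneg_AE) (simp add: nn)
  show ?thesis
  proof (rule ccontr)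
    assume "\<not> ?thesis"
    then have "integral\<^sup>L (PL S) (\<lambda>y. G (emb S m y)) = 0" using ge by linarith
    then have ae: "AE y in PL S. G (emb S m y) = 0"
      using integral_nonneg_eq_0_iff_AE[OF int] nn by simp
    define p where "p = emb S m y0"
    have "isCont G p" using cont by (simp add: continuous_on_eq_continuous_at)
    then obtain \<delta> where d0: "\<delta> > 0" and dG: "\<And>x. dist p x < \<delta> \<Longrightarrow> G x \<noteq> 0"
      using continuous_at_avoid[of p G 0] pos unfolding p_def by force
    define d where "d = \<delta> / (real CARD('n) + 1)"
    have dpos: "d > 0" using d0 by (simp add: d_def)
    have cd: "real CARD('n) * d < \<delta>"
    proof -
      have "real CARD('n) * d < (real CARD('n) + 1) * d" using dpos by simp
      also have "\<dots> = \<delta>" by (simp add: d_def)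
      finally show ?thesis .
    qed
    define B where "B = Pi\<^sub>E S (\<lambda>j. {y0 j - d .. y0 j + d})"
    have Bsets: "B \<in> sets (PL S)"
      unfolding B_def by (rule sets_PiM_I_finite) auto
    have Bsub: "B \<subseteq> {x \<in> space (PL S). G (emb S m x) \<noteq> 0}"
    proof
      fix x assume x: "x \<in> B"
      have comp: "\<bar>(emb S m x - p) $ i\<bar> \<le> d" for i
        using x dpos by (cases "i \<in> S") (auto simp: p_def emb_comp B_def PiE_iff abs_le_iff)
      have "dist p (emb S m x) = norm (emb S m x - p)" by (simp add: dist_norm norm_minus_commute)
      also have "\<dots> \<le> (\<Sum>i\<in>UNIV. \<bar>(emb S m x - p) $ i\<bar>)" by (rule norm_le_l1_cart)
      also have "\<dots> \<le> (\<Sum>i\<in>(UNIV::'n set). d)" by (rule sum_mono) (rule comp)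
      also have "\<dots> = real CARD('n) * d" by simp
      also have "\<dots> < \<delta>" by (rule cd)
      finally have "G (emb S m x) \<noteq> 0" by (rule dG)
      moreover have "x \<in> space (PL S)" using x Bsets sets.sets_into_space by blast
      ultimately show "x \<in> {x \<in> space (PL S). G (emb S m x) \<noteq> 0}" by simp
    qed
    from ae obtain N where N: "{x \<in> space (PL S). \<not> G (emb S m x) = 0} \<subseteq> N"
      "emeasure (PL S) N = 0" "N \<in> sets (PL S)"
      by (rule AE_E)
    have "emeasure (PL S) B \<le> emeasure (PL S) N"
      using Bsub N by (intro emeasure_mono) auto
    then have B0: "emeasure (PL S) B = 0" using N by simp
    have "emeasure (PL S) B = (\<Prod>i\<in>S. emeasure lborel {y0 i - d .. y0 i + d})"
      unfolding B_def by (rule emeasure_PiM) auto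
    also have "\<dots> \<noteq> 0" using dpos by (simp add: emeasure_lborel_Icc_eq)
    finally show False using B0 by simp
  qed
qed


definition nz :: "real^'n \<Rightarrow> 'n set" where "nz \<theta> = {j. \<theta> $ j \<noteq> 0}"

definition KP :: "real^'n \<Rightarrow> real^'n \<Rightarrow> real^'n \<Rightarrow> complex" where
  "KP \<theta> m x = (\<Prod>j\<in>nz \<theta>. homodyne_kernel (\<theta>$j) (m$j) (x$j))"

lemma bra_eq: "homodyne_bra \<theta> m psi =
  integral\<^sup>L (PL (nz \<theta>)) (\<lambda>y. KP \<theta> m (emb (nz \<theta>) m y) * psi (emb (nz \<theta>) m y))"
proof -
  have "(\<Prod>j\<in>nz \<theta>. homodyne_kernel (\<theta> $ j) (m $ j) (y j)) = KP \<theta> m (emb (nz \<theta>) m y)" for y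
    unfolding KP_def by (rule prod.cong) (auto simp: emb_comp)
  then show ?thesis
    unfolding homodyne_bra_def Let_def by (simp add: emb_def nz_def)
qed

lemma hk_cont: "continuous_on UNIV (\<lambda>x::real^'n. homodyne_kernel t a (x$j))"
  unfolding homodyne_kernel_def divide_inverse by (intro continuous_intros)

lemma KP_cont: "continuous_on UNIV (KP \<theta> m)"
  unfolding KP_def by (intro continuous_on_prod hk_cont)

lemma angle_sin: assumes "t \<in> {-(pi/2)<..pi/2}" "t \<noteq> 0" shows "sin t \<noteq> 0"
proof -
  have "\<bar>t\<bar> < pi" using assms pi_gt_zero by auto
  then show ?thesis using sin_zero_pi_iff assms by blast
qed

lemma den_nz: assumes "t \<in> {-(pi/2)<..pi/2}" "t \<noteq> 0"
  shows "complex_of_real (sqrt pi) * csqrt (1 - cis (2 * t)) \<noteq> 0"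
proof -
  have "sin t \<noteq> 0" by (rule angle_sin[OF assms])
  then have "cos (2*t) < 1" by (simp add: cos_double_sin)
  then have "cis (2*t) \<noteq> 1" by (metis complex.sel(1) cis.sel(1) less_irrefl one_complex.sel(1))
  then show ?thesis by simp
qed

lemma hk_nz: assumes "t \<in> {-(pi/2)<..pi/2}" "t \<noteq> 0"
  shows "homodyne_kernel t a y \<noteq> 0"
  unfolding homodyne_kernel_def using den_nz[OF assms] by simp

lemma KP_nz: assumes "\<forall>j. \<theta> $ j \<in> {-(pi/2)<..pi/2}" shows "KP \<theta> m x \<noteq> 0"
  unfolding KP_def using hk_nz assms by (auto simp: nz_def)

lemma orth_norm: assumes "orthogonal_matrix (R::real^'n^'n)" shows "norm (R *v x) = norm x"
proof -
  have "orthogonal_transformation (\<lambda>x. R *v x)"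
    using assms by (simp add: orthogonal_transformation_matrix)
  then show ?thesis by (rule orthogonal_transformation_norm)
qed

lemma orth_inv: assumes "orthogonal_matrix (R::real^'n^'n)"
  shows "R *v (transpose R *v x) = x" "transpose R *v (R *v x) = x"
  using assms by (metis matrix_vector_mul_assoc matrix_vector_mul_lid orthogonal_matrix_def)+

lemma orth_row: assumes "orthogonal_matrix (R::real^'n^'n)" shows "\<exists>j. R $ i $ j \<noteq> 0"
proof (rule ccontr)
  assume "\<not> ?thesis"
  then have "(R ** transpose R) $ i $ i = 0"
    by (simp add: matrix_matrix_mult_def transpose_def)
  then show False using assms by (simp add: orthogonal_matrix_def mat_def)
qed

lemma orth_col: assumes "orthogonal_matrix (R::real^'n^'n)" shows "\<exists>i. R $ i $ j \<noteq> 0"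
proof (rule ccontr)
  assume "\<not> ?thesis"
  then have "(transpose R ** R) $ j $ j = 0"
    by (simp add: matrix_matrix_mult_def transpose_def)
  then show False using assms by (simp add: orthogonal_matrix_def mat_def)
qed

lemma det_inv_nz: assumes "invertible (L::real^'n^'n)" shows "det (matrix_inv L) \<noteq> 0"
proof -
  have "L ** matrix_inv L = mat 1"
    using assms unfolding invertible_def matrix_inv_def by (rule someI2_ex) auto
  then have "det L * det (matrix_inv L) = 1" by (metis det_mul det_I)
  then show ?thesis by auto
qed


lemma mv_cont: "continuous_on UNIV (\<lambda>z::real^'n. (R::real^'n^'m) *v z)"
  by (intro linear_continuous_on linear_conv_bounded_linear[THEN iffD1] matrix_vector_mul_linear)

lemma KPR_cont: "continuous_on UNIV (\<lambda>z. KP \<theta> m ((R::real^'n^'n) *v z))"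
  by (rule continuous_on_compose2[OF KP_cont mv_cont]) auto

lemma emb_axis: "i \<in> S \<Longrightarrow> emb S 0 (\<lambda>k. if k = i then 1 else 0) = axis i 1"
  by (auto simp: emb_def axis_def vec_eq_iff)

lemma emb_UNIV: "emb UNIV m (\<lambda>k. x $ k) = x"
  by (auto simp: emb_def vec_eq_iff)

lemma caseA:
  fixes \<theta> \<theta>' :: "real^'n" and R :: "real^'n^'n" and c :: real
  assumes ang: "\<forall>j. \<theta> $ j \<in> {-(pi/2)<..pi/2}"
    and orth: "orthogonal_matrix R"
    and H: "\<forall>psi. test_ket psi \<longrightarrow> homodyne_bra \<theta> 0 (passive_action R psi) = complex_of_real c * homodyne_bra \<theta>' 0 psi"
    and ij: "i \<in> nz \<theta>" "j \<notin> nz \<theta>'" "R$i$j \<noteq> 0"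
  shows False
proof -
  define r where "r = \<bar>R$i$j\<bar>"
  define p where "p = R$i"
  define b where "b z = max 0 (r - norm (z - p))" for z
  define psi where "psi z = complex_of_real (b z) * cnj (KP \<theta> 0 (R *v z))" for z
  have bcont: "continuous_on UNIV b" unfolding b_def by (intro continuous_intros)
  have bsupp: "b z \<noteq> 0 \<Longrightarrow> z \<in> cball p r" for z by (auto simp: b_def dist_norm norm_minus_commute)
  have "test_ket psi"
    unfolding test_ket_def
  proof
    show "continuous_on UNIV psi" unfolding psi_def
      by (intro continuous_intros bcont KPR_cont)
    show "bounded {x. psi x \<noteq> 0}"
      by (rule bounded_subset[OF bounded_cball[of p r]]) (auto simp: psi_def intro: bsupp)
  qed
  with H have eq: "homodyne_bra \<theta> 0 (passive_action R psi) = complex_of_real c * homodyne_bra \<theta>' 0 psi" by blast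
  define G where "G x = b (transpose R *v x) * (cmod (KP \<theta> 0 x))\<^sup>2" for x
  have "homodyne_bra \<theta> 0 (passive_action R psi) = integral\<^sup>L (PL (nz \<theta>)) (\<lambda>y. complex_of_real (G (emb (nz \<theta>) 0 y)))"
    unfolding bra_eq
  proof (rule Bochner_Integration.integral_cong[OF refl])
    fix y
    let ?x = "emb (nz \<theta>) 0 y"
    have sq: "KP \<theta> 0 ?x * cnj (KP \<theta> 0 ?x) = complex_of_real ((cmod (KP \<theta> 0 ?x))\<^sup>2)"
      by (rule complex_norm_square[symmetric])
    show "KP \<theta> 0 ?x * passive_action R psi ?x = complex_of_real (G ?x)"
      unfolding passive_action_def psi_def G_def orth_inv[OF orth] of_real_mult
      by (subst mult.left_commute) (simp only: sq)
  qed
  also have "\<dots> = complex_of_real (integral\<^sup>L (PL (nz \<theta>)) (\<lambda>y. G (emb (nz \<theta>) 0 y)))" by simp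
  finally have L: "homodyne_bra \<theta> 0 (passive_action R psi) = complex_of_real (integral\<^sup>L (PL (nz \<theta>)) (\<lambda>y. G (emb (nz \<theta>) 0 y)))" .
  have Gpos: "integral\<^sup>L (PL (nz \<theta>)) (\<lambda>y. G (emb (nz \<theta>) 0 y)) > 0"
  proof (rule emb_pos)
    show "continuous_on UNIV G" unfolding G_def
      by (intro continuous_intros continuous_on_compose2[OF bcont mv_cont] KP_cont) auto
    show "bounded {x. G x \<noteq> 0}"
    proof (rule bounded_subset[OF bounded_cball[of 0 "norm p + r"]], safe)
      fix x assume "G x \<noteq> 0"
      then have "b (transpose R *v x) \<noteq> 0" by (auto simp: G_def)
      then have "transpose R *v x \<in> cball p r" by (rule bsupp)
      then have "norm (transpose R *v x - p) \<le> r" by (simp add: dist_norm norm_minus_commute)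
      moreover have "norm (transpose R *v x) = norm x"
        using orth orth_norm[of "transpose R" x] orthogonal_matrix_transpose by blast
      ultimately show "x \<in> cball 0 (norm p + r)"
        using norm_triangle_ineq2[of "transpose R *v x" p] by simp
    qed
    show "0 \<le> G x" for x by (simp add: G_def b_def)
    have "transpose R *v axis i 1 = p"
      by (simp add: matrix_vector_mult_basis p_def column_def transpose_def vec_eq_iff)
    moreover have "r > 0" using ij by (simp add: r_def)
    moreover have "KP \<theta> 0 (axis i 1) \<noteq> 0" by (rule KP_nz[OF ang])
    ultimately show "G (emb (nz \<theta>) 0 (\<lambda>k. if k = i then 1 else 0)) > 0"
      using ij by (simp add: emb_axis G_def b_def)
  qed
  have "homodyne_bra \<theta>' 0 psi = integral\<^sup>L (PL (nz \<theta>')) (\<lambda>y. 0)"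
    unfolding bra_eq
  proof (rule Bochner_Integration.integral_cong[OF refl])
    fix y
    let ?x = "emb (nz \<theta>') 0 y"
    have "\<bar>(?x - p) $ j\<bar> = r" using ij by (simp add: emb_comp r_def p_def)
    then have "r \<le> norm (?x - p)" by (metis component_le_norm_cart)
    then have "b ?x = 0" by (simp add: b_def)
    then show "KP \<theta>' 0 ?x * psi ?x = 0" by (simp add: psi_def)
  qed
  then have "homodyne_bra \<theta>' 0 psi = 0" by simp
  with eq L Gpos show False by simp
qed


lemma caseB:
  fixes \<theta> \<theta>' :: "real^'n" and R :: "real^'n^'n" and c :: real
  assumes ang': "\<forall>j. \<theta>' $ j \<in> {-(pi/2)<..pi/2}"
    and orth: "orthogonal_matrix R" and cpos: "c > 0"
    and H: "\<forall>psi. test_ket psi \<longrightarrow> homodyne_bra \<theta> 0 (passive_action R psi) = complex_of_real c * homodyne_bra \<theta>' 0 psi"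
    and ij: "i \<notin> nz \<theta>" "j \<in> nz \<theta>'" "R$i$j \<noteq> 0"
  shows False
proof -
  define r where "r = \<bar>R$i$j\<bar>"
  define q where "q = column j R"
  define b where "b z = max 0 (r - norm (z - q))" for z
  define psi where "psi z = complex_of_real (b (R *v z)) * cnj (KP \<theta>' 0 z)" for z
  have bcont: "continuous_on UNIV b" unfolding b_def by (intro continuous_intros)
  have bsupp: "b z \<noteq> 0 \<Longrightarrow> z \<in> cball q r" for z by (auto simp: b_def dist_norm norm_minus_commute)
  have nR: "norm (R *v x) = norm x" for x using orth by (rule orth_norm)
  have bRsupp: "x \<in> cball 0 (norm q + r)" if "b (R *v x) \<noteq> 0" for x
  proof -
    have "R *v x \<in> cball q r" using that by (rule bsupp)
    then have "norm (R *v x - q) \<le> r" by (simp add: dist_norm norm_minus_commute)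
    then show ?thesis using norm_triangle_ineq2[of "R *v x" q] nR[of x] by simp
  qed
  have "test_ket psi"
    unfolding test_ket_def
  proof
    show "continuous_on UNIV psi" unfolding psi_def
      by (intro continuous_intros continuous_on_compose2[OF bcont mv_cont] KP_cont) auto
    show "bounded {x. psi x \<noteq> 0}"
      by (rule bounded_subset[OF bounded_cball[of 0 "norm q + r"]]) (auto simp: psi_def intro: bRsupp)
  qed
  with H have eq: "homodyne_bra \<theta> 0 (passive_action R psi) = complex_of_real c * homodyne_bra \<theta>' 0 psi" by blast
  define G where "G x = b (R *v x) * (cmod (KP \<theta>' 0 x))\<^sup>2" for x
  have "homodyne_bra \<theta>' 0 psi = integral\<^sup>L (PL (nz \<theta>')) (\<lambda>y. complex_of_real (G (emb (nz \<theta>') 0 y)))"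
    unfolding bra_eq
  proof (rule Bochner_Integration.integral_cong[OF refl])
    fix y
    let ?x = "emb (nz \<theta>') 0 y"
    have sq: "KP \<theta>' 0 ?x * cnj (KP \<theta>' 0 ?x) = complex_of_real ((cmod (KP \<theta>' 0 ?x))\<^sup>2)"
      by (rule complex_norm_square[symmetric])
    show "KP \<theta>' 0 ?x * psi ?x = complex_of_real (G ?x)"
      unfolding psi_def G_def of_real_mult
      by (subst mult.left_commute) (simp only: sq)
  qed
  also have "\<dots> = complex_of_real (integral\<^sup>L (PL (nz \<theta>')) (\<lambda>y. G (emb (nz \<theta>') 0 y)))" by simp
  finally have Rt: "homodyne_bra \<theta>' 0 psi = complex_of_real (integral\<^sup>L (PL (nz \<theta>')) (\<lambda>y. G (emb (nz \<theta>') 0 y)))" .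
  have Gpos: "integral\<^sup>L (PL (nz \<theta>')) (\<lambda>y. G (emb (nz \<theta>') 0 y)) > 0"
  proof (rule emb_pos)
    show "continuous_on UNIV G" unfolding G_def
      by (intro continuous_intros continuous_on_compose2[OF bcont mv_cont] KP_cont) auto
    show "bounded {x. G x \<noteq> 0}"
      by (rule bounded_subset[OF bounded_cball[of 0 "norm q + r"]]) (auto simp: G_def intro: bRsupp)
    show "0 \<le> G x" for x by (simp add: G_def b_def)
    have "R *v axis j 1 = q"
      by (simp add: matrix_vector_mult_basis q_def)
    moreover have "r > 0" using ij by (simp add: r_def)
    moreover have "KP \<theta>' 0 (axis j 1) \<noteq> 0" by (rule KP_nz[OF ang'])
    ultimately show "G (emb (nz \<theta>') 0 (\<lambda>k. if k = j then 1 else 0)) > 0"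
      using ij by (simp add: emb_axis G_def b_def)
  qed
  have "homodyne_bra \<theta> 0 (passive_action R psi) = integral\<^sup>L (PL (nz \<theta>)) (\<lambda>y. 0)"
    unfolding bra_eq
  proof (rule Bochner_Integration.integral_cong[OF refl])
    fix y
    let ?x = "emb (nz \<theta>) 0 y"
    have "\<bar>(?x - q) $ i\<bar> = r" using ij by (simp add: emb_comp r_def q_def column_def)
    then have "r \<le> norm (?x - q)" by (metis component_le_norm_cart)
    then have "b ?x = 0" by (simp add: b_def)
    then show "KP \<theta> 0 ?x * passive_action R psi ?x = 0"
      unfolding psi_def passive_action_def orth_inv[OF orth] by simp
  qed
  then have "homodyne_bra \<theta> 0 (passive_action R psi) = 0" by simp
  with eq Rt Gpos cpos show False by simp
qed


lemma nonneg_test: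
  fixes h :: "real^'n \<Rightarrow> real"
  assumes hc: "continuous_on UNIV h"
    and A: "\<And>b. continuous_on UNIV b \<Longrightarrow> bounded {x. b x \<noteq> 0} \<Longrightarrow> (\<forall>x. 0 \<le> b x) \<Longrightarrow>
       integral\<^sup>L (PL UNIV) (\<lambda>y. b (emb UNIV 0 y) * h (emb UNIV 0 y)) \<ge> 0"
  shows "h x0 \<ge> 0"
proof (rule ccontr)
  assume neg: "\<not> h x0 \<ge> 0"
  define bump where "bump x = max 0 (1 - norm (x - x0))" for x
  define b where "b x = bump x * max 0 (- h x)" for x
  define g where "g x = bump x * (max 0 (- h x))\<^sup>2" for x
  have bumpc: "continuous_on UNIV bump" unfolding bump_def by (intro continuous_intros)
  have bumps: "bump x \<noteq> 0 \<Longrightarrow> x \<in> cball x0 1" for x by (auto simp: bump_def dist_norm norm_minus_commute)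
  have "integral\<^sup>L (PL UNIV) (\<lambda>y. b (emb UNIV 0 y) * h (emb UNIV 0 y)) \<ge> 0"
  proof (rule A)
    show "continuous_on UNIV b" unfolding b_def by (intro continuous_intros bumpc hc)
    show "bounded {x. b x \<noteq> 0}"
      by (rule bounded_subset[OF bounded_cball[of x0 1]]) (auto simp: b_def intro: bumps)
    show "\<forall>x. 0 \<le> b x" by (simp add: b_def bump_def)
  qed
  moreover have "(\<lambda>y. b (emb UNIV 0 y) * h (emb UNIV 0 y)) = (\<lambda>y. - g (emb UNIV 0 y))"
  proof
    fix y
    show "b (emb UNIV 0 y) * h (emb UNIV 0 y) = - g (emb UNIV 0 y)"
      by (cases "h (emb UNIV 0 y) \<ge> 0") (auto simp: b_def g_def power2_eq_square max_def)
  qed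
  moreover have "integral\<^sup>L (PL UNIV) (\<lambda>y. g (emb UNIV 0 y)) > 0"
  proof (rule emb_pos)
    show "continuous_on UNIV g" unfolding g_def by (intro continuous_intros bumpc hc)
    show "bounded {x. g x \<noteq> 0}"
      by (rule bounded_subset[OF bounded_cball[of x0 1]]) (auto simp: g_def intro: bumps)
    show "0 \<le> g x" for x by (simp add: g_def bump_def)
    show "g (emb UNIV 0 (\<lambda>k. x0 $ k)) > 0" using neg by (simp add: emb_UNIV g_def bump_def)
  qed
  ultimately show False by simp
qed

lemma w_real:
  fixes w :: "real^'n \<Rightarrow> complex"
  assumes wc: "continuous_on UNIV w"
    and A: "\<And>b. continuous_on UNIV b \<Longrightarrow> bounded {x. b x \<noteq> 0} \<Longrightarrow> (\<forall>x. 0 \<le> b x) \<Longrightarrow>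
       \<exists>t\<ge>0. integral\<^sup>L (PL UNIV) (\<lambda>y. complex_of_real (b (emb UNIV 0 y)) * w (emb UNIV 0 y)) = complex_of_real t"
  shows "Im (w x) = 0 \<and> Re (w x) \<ge> 0"
proof -
  have key: "integral\<^sup>L (PL UNIV) (\<lambda>y. b (emb UNIV 0 y) * Im (w (emb UNIV 0 y))) = 0 \<and>
             integral\<^sup>L (PL UNIV) (\<lambda>y. b (emb UNIV 0 y) * Re (w (emb UNIV 0 y))) \<ge> 0"
    if bc: "continuous_on UNIV b" and bb: "bounded {x. b x \<noteq> 0}" and bn: "\<forall>x. 0 \<le> b x" for b
  proof -
    obtain t where t: "t \<ge> 0" "integral\<^sup>L (PL UNIV) (\<lambda>y. complex_of_real (b (emb UNIV 0 y)) * w (emb UNIV 0 y)) = complex_of_real t"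
      using A[OF bc bb bn] by blast
    have int: "integrable (PL UNIV) (\<lambda>y. complex_of_real (b (emb UNIV 0 y)) * w (emb UNIV 0 y))"
    proof (rule emb_integrable[where G="\<lambda>x. complex_of_real (b x) * w x"])
      show "continuous_on UNIV (\<lambda>x. complex_of_real (b x) * w x)" by (intro continuous_intros bc wc)
      show "bounded {x. complex_of_real (b x) * w x \<noteq> 0}"
        by (rule bounded_subset[OF bb]) auto
    qed
    have "integral\<^sup>L (PL UNIV) (\<lambda>y. Im (complex_of_real (b (emb UNIV 0 y)) * w (emb UNIV 0 y))) = Im (complex_of_real t)"
      using integral_Im[OF int] t(2) by simp
    moreover have "integral\<^sup>L (PL UNIV) (\<lambda>y. Re (complex_of_real (b (emb UNIV 0 y)) * w (emb UNIV 0 y))) = Re (complex_of_real t)"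
      using integral_Re[OF int] t(2) by simp
    ultimately show ?thesis using t(1) by simp
  qed
  have "Im (w x) \<ge> 0"
    by (rule nonneg_test[where h="\<lambda>x. Im (w x)"]) (auto intro!: continuous_intros wc simp: key)
  moreover have "- Im (w x) \<ge> 0"
  proof (rule nonneg_test[where h="\<lambda>x. - Im (w x)"])
    show "continuous_on UNIV (\<lambda>x. - Im (w x))" by (intro continuous_intros wc)
    fix b :: "real^'n \<Rightarrow> real"
    assume "continuous_on UNIV b" "bounded {x. b x \<noteq> 0}" "\<forall>x. 0 \<le> b x"
    then show "integral\<^sup>L (PL UNIV) (\<lambda>y. b (emb UNIV 0 y) * - Im (w (emb UNIV 0 y))) \<ge> 0"
      using key by simp
  qed
  moreover have "Re (w x) \<ge> 0"
    by (rule nonneg_test[where h="\<lambda>x. Re (w x)"]) (auto intro!: continuous_intros wc simp: key)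
  ultimately show ?thesis by simp
qed

lemma prod_cis: "finite A \<Longrightarrow> (\<Prod>j\<in>A. cis (f j)) = cis (\<Sum>j\<in>A. f j)"
  by (induction A rule: finite_induct) (auto simp: cis_mult)

lemma cis_sq: assumes "\<And>t::real. cis (t\<^sup>2 * q) = 1" shows "q = 0"
proof (rule ccontr)
  assume q: "q \<noteq> 0"
  define t where "t = sqrt (pi / \<bar>q\<bar>)"
  have "t\<^sup>2 = pi / \<bar>q\<bar>" unfolding t_def using q by simp
  then have tq: "t\<^sup>2 * \<bar>q\<bar> = pi" using q by simp
  have "t\<^sup>2 * q = pi \<or> t\<^sup>2 * q = - pi"
  proof (cases "q < 0")
    case True then have "\<bar>q\<bar> = - q" by simp
    with tq show ?thesis by simp
  next
    case False then have "\<bar>q\<bar> = q" by simp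
    with tq show ?thesis by simp
  qed
  moreover have "cis (-pi) = -1" by (simp add: complex_eq_iff)
  ultimately have "cis (t\<^sup>2 * q) = -1" by auto
  with assms[of t] show False by simp
qed


definition den :: "real \<Rightarrow> complex" where
  "den t = complex_of_real (sqrt pi) * csqrt (1 - cis (2 * t))"

lemma hk0: "homodyne_kernel t 0 y = cis (- (cot t * y\<^sup>2) / 2) / den t"
  by (simp add: homodyne_kernel_def den_def)

lemma KP_formula: assumes "\<forall>j. \<theta> $ j \<noteq> 0"
  shows "KP \<theta> 0 x = cis (- (\<Sum>j\<in>UNIV. cot (\<theta>$j) * (x$j)\<^sup>2) / 2) / (\<Prod>j\<in>UNIV. den (\<theta>$j))"
proof -
  have "nz \<theta> = UNIV" using assms by (auto simp: nz_def)
  then have "KP \<theta> 0 x = (\<Prod>j\<in>UNIV. cis (- (cot (\<theta>$j) * (x$j)\<^sup>2) / 2) / den (\<theta>$j))"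
    by (simp add: KP_def hk0)
  also have "\<dots> = (\<Prod>j\<in>UNIV. cis (- (cot (\<theta>$j) * (x$j)\<^sup>2) / 2)) / (\<Prod>j\<in>UNIV. den (\<theta>$j))"
    by (rule prod_dividef)
  also have "(\<Prod>j\<in>UNIV. cis (- (cot (\<theta>$j) * (x$j)\<^sup>2) / 2)) = cis (\<Sum>j\<in>UNIV. - (cot (\<theta>$j) * (x$j)\<^sup>2) / 2)"
    by (rule prod_cis) simp
  also have "(\<Sum>j\<in>UNIV. - (cot (\<theta>$j) * (x$j)\<^sup>2) / 2) = - (\<Sum>j\<in>UNIV. cot (\<theta>$j) * (x$j)\<^sup>2) / 2"
    by (simp add: sum_negf sum_divide_distrib)
  finally show ?thesis .
qed

lemma polar:
  fixes R :: "real^'n^'n" and d d' :: "'n \<Rightarrow> real"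
  defines "Qf \<equiv> \<lambda>x. (\<Sum>i\<in>UNIV. d i * ((R *v x)$i)\<^sup>2) - (\<Sum>j\<in>UNIV. d' j * (x$j)\<^sup>2)"
  shows "Qf (x + y) = Qf x + Qf y + 2 * ((\<Sum>i\<in>UNIV. d i * (R *v x)$i * (R *v y)$i) - (\<Sum>j\<in>UNIV. d' j * x$j * y$j))"
proof -
  have e1: "(\<Sum>i\<in>UNIV. d i * ((R *v (x + y))$i)\<^sup>2) = (\<Sum>i\<in>UNIV. d i * ((R *v x)$i)\<^sup>2) + (\<Sum>i\<in>UNIV. d i * ((R *v y)$i)\<^sup>2) + 2 * (\<Sum>i\<in>UNIV. d i * (R *v x)$i * (R *v y)$i)"
    by (simp add: matrix_vector_right_distrib power2_eq_square sum.distrib[symmetric] sum_distrib_left algebra_simps)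
  have e2: "(\<Sum>j\<in>UNIV. d' j * ((x + y)$j)\<^sup>2) = (\<Sum>j\<in>UNIV. d' j * (x$j)\<^sup>2) + (\<Sum>j\<in>UNIV. d' j * (y$j)\<^sup>2) + 2 * (\<Sum>j\<in>UNIV. d' j * x$j * y$j)"
    by (simp add: power2_eq_square sum.distrib[symmetric] sum_distrib_left algebra_simps)
  show ?thesis unfolding Qf_def e1 e2 by (simp add: algebra_simps)
qed

lemma Q_scale:
  fixes R :: "real^'n^'n" and d d' :: "'n \<Rightarrow> real"
  defines "Qf \<equiv> \<lambda>x. (\<Sum>i\<in>UNIV. d i * ((R *v x)$i)\<^sup>2) - (\<Sum>j\<in>UNIV. d' j * (x$j)\<^sup>2)"
  shows "Qf (t *\<^sub>R x) = t\<^sup>2 * Qf x"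
  unfolding Qf_def matrix_vector_mult_scaleR
  by (simp add: power_mult_distrib sum_distrib_left right_diff_distrib algebra_simps)


lemma caseU:
  fixes \<theta> \<theta>' :: "real^'n" and R :: "real^'n^'n" and c :: real
  assumes ang: "\<forall>j. \<theta> $ j \<in> {-(pi/2)<..pi/2}" and ang': "\<forall>j. \<theta>' $ j \<in> {-(pi/2)<..pi/2}"
    and orth: "orthogonal_matrix R" and cpos: "c > 0"
    and H: "\<forall>psi. test_ket psi \<longrightarrow> homodyne_bra \<theta> 0 (passive_action R psi) = complex_of_real c * homodyne_bra \<theta>' 0 psi"
    and nz1: "\<forall>j. \<theta> $ j \<noteq> 0" and nz2: "\<forall>j. \<theta>' $ j \<noteq> 0"
  shows "cot (\<theta>$k) * R$k$j = cot (\<theta>'$j) * R$k$j"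
proof -
  have S1: "nz \<theta> = UNIV" using nz1 by (auto simp: nz_def)
  have S2: "nz \<theta>' = UNIV" using nz2 by (auto simp: nz_def)
  define w where "w x = complex_of_real c * KP \<theta>' 0 x * cnj (KP \<theta> 0 (R *v x))" for x
  have wc: "continuous_on UNIV w" unfolding w_def
    by (intro continuous_intros KP_cont KPR_cont)
  have wr: "Im (w x) = 0 \<and> Re (w x) \<ge> 0" for x
  proof (rule w_real[OF wc])
    fix b :: "real^'n \<Rightarrow> real"
    assume bc: "continuous_on UNIV b" and bb: "bounded {x. b x \<noteq> 0}" and bn: "\<forall>x. 0 \<le> b x"
    define psi where "psi z = complex_of_real (b z) * cnj (KP \<theta> 0 (R *v z))" for z
    have "test_ket psi"
      unfolding test_ket_def
    proof
      show "continuous_on UNIV psi" unfolding psi_def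
        by (intro continuous_intros bc KPR_cont)
      show "bounded {x. psi x \<noteq> 0}"
        by (rule bounded_subset[OF bb]) (auto simp: psi_def)
    qed
    with H have eq: "homodyne_bra \<theta> 0 (passive_action R psi) = complex_of_real c * homodyne_bra \<theta>' 0 psi" by blast
    define G where "G x = b (transpose R *v x) * (cmod (KP \<theta> 0 x))\<^sup>2" for x
    have "homodyne_bra \<theta> 0 (passive_action R psi) = integral\<^sup>L (PL (nz \<theta>)) (\<lambda>y. complex_of_real (G (emb (nz \<theta>) 0 y)))"
      unfolding bra_eq
    proof (rule Bochner_Integration.integral_cong[OF refl])
      fix y
      let ?x = "emb (nz \<theta>) 0 y"
      have sq: "KP \<theta> 0 ?x * cnj (KP \<theta> 0 ?x) = complex_of_real ((cmod (KP \<theta> 0 ?x))\<^sup>2)"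
        by (rule complex_norm_square[symmetric])
      show "KP \<theta> 0 ?x * passive_action R psi ?x = complex_of_real (G ?x)"
        unfolding passive_action_def psi_def G_def orth_inv[OF orth] of_real_mult
        by (subst mult.left_commute) (simp only: sq)
    qed
    also have "\<dots> = complex_of_real (integral\<^sup>L (PL (nz \<theta>)) (\<lambda>y. G (emb (nz \<theta>) 0 y)))" by simp
    finally have L: "homodyne_bra \<theta> 0 (passive_action R psi) = complex_of_real (integral\<^sup>L (PL (nz \<theta>)) (\<lambda>y. G (emb (nz \<theta>) 0 y)))" .
    have Gnn: "integral\<^sup>L (PL (nz \<theta>)) (\<lambda>y. G (emb (nz \<theta>) 0 y)) \<ge> 0"
      by (rule integral_nonneg_AE) (simp add: G_def bn)
    have "complex_of_real c * homodyne_bra \<theta>' 0 psi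
        = complex_of_real c * integral\<^sup>L (PL UNIV) (\<lambda>y. KP \<theta>' 0 (emb UNIV 0 y) * psi (emb UNIV 0 y))"
      unfolding bra_eq S2 ..
    also have "\<dots> = integral\<^sup>L (PL UNIV) (\<lambda>y. complex_of_real c * (KP \<theta>' 0 (emb UNIV 0 y) * psi (emb UNIV 0 y)))"
      by simp
    also have "\<dots> = integral\<^sup>L (PL UNIV) (\<lambda>y. complex_of_real (b (emb UNIV 0 y)) * w (emb UNIV 0 y))"
      by (rule Bochner_Integration.integral_cong[OF refl]) (simp add: psi_def w_def algebra_simps)
    finally show "\<exists>t\<ge>0. integral\<^sup>L (PL UNIV) (\<lambda>y. complex_of_real (b (emb UNIV 0 y)) * w (emb UNIV 0 y)) = complex_of_real t"
      using eq L Gnn by metis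
  qed
  define A where "A \<theta>0 x = (\<Sum>j\<in>UNIV. cot (\<theta>0$j) * (x$j)\<^sup>2)" for \<theta>0 :: "real^'n" and x :: "real^'n"
  define Qf where "Qf x = (\<Sum>i\<in>UNIV. cot (\<theta>$i) * ((R *v x)$i)\<^sup>2) - (\<Sum>j\<in>UNIV. cot (\<theta>'$j) * (x$j)\<^sup>2)" for x
  define \<kappa> where "\<kappa> = complex_of_real c / ((\<Prod>j\<in>UNIV. den (\<theta>'$j)) * cnj (\<Prod>j\<in>UNIV. den (\<theta>$j)))"
  have wf: "w x = \<kappa> * cis (Qf x / 2)" for x
  proof -
    have "w x = complex_of_real c * (cis (- A \<theta>' x / 2) / (\<Prod>j\<in>UNIV. den (\<theta>'$j)))
                * (cis (A \<theta> (R *v x) / 2) / cnj (\<Prod>j\<in>UNIV. den (\<theta>$j)))"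
      unfolding w_def KP_formula[OF nz1] KP_formula[OF nz2] A_def by (simp add: cis_cnj)
    also have "\<dots> = \<kappa> * (cis (- A \<theta>' x / 2) * cis (A \<theta> (R *v x) / 2))"
      by (simp add: \<kappa>_def)
    also have "\<dots> = \<kappa> * cis (Qf x / 2)"
      by (simp add: cis_mult Qf_def A_def diff_divide_distrib)
    finally show ?thesis .
  qed
  have dnz: "(\<Prod>j\<in>UNIV. den (t$j)) \<noteq> 0" if "\<forall>j. t$j \<in> {-(pi/2)<..pi/2}" "\<forall>j. t$j \<noteq> 0" for t :: "real^'n"
    using den_nz that by (auto simp: den_def)
  have knz: "\<kappa> \<noteq> 0" using cpos dnz[OF ang nz1] dnz[OF ang' nz2] by (simp add: \<kappa>_def)
  have wconst: "w x = complex_of_real (cmod \<kappa>)" for x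
  proof -
    have "cmod (w x) = \<bar>Re (w x)\<bar>" using wr[of x] by (simp add: cmod_eq_Re)
    then have "w x = complex_of_real (cmod (w x))" using wr[of x] by (simp add: complex_eq_iff)
    also have "cmod (w x) = cmod \<kappa>" by (simp add: wf norm_mult)
    finally show ?thesis .
  qed
  have Q0: "Qf 0 = 0" by (simp add: Qf_def)
  have "w 0 = \<kappa>" by (simp add: wf Q0)
  then have cis1: "cis (Qf x / 2) = 1" for x
    using wconst[of x] wconst[of 0] wf[of x] knz by simp
  have Qz: "Qf x = 0" for x
  proof -
    have "cis (t\<^sup>2 * (Qf x / 2)) = 1" for t
    proof -
      have "Qf (t *\<^sub>R x) = t\<^sup>2 * Qf x" unfolding Qf_def by (rule Q_scale)
      then show ?thesis using cis1[of "t *\<^sub>R x"] by simp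
    qed
    then have "Qf x / 2 = 0" by (rule cis_sq)
    then show ?thesis by simp
  qed
  define Bf where "Bf x y = (\<Sum>i\<in>UNIV. cot (\<theta>$i) * (R *v x)$i * (R *v y)$i) - (\<Sum>j\<in>UNIV. cot (\<theta>'$j) * x$j * y$j)" for x y
  have "Qf (x + y) = Qf x + Qf y + 2 * Bf x y" for x y
    unfolding Qf_def Bf_def by (rule polar)
  then have Bz: "Bf x y = 0" for x y using Qz by simp
  define x where "x = transpose R *v axis k 1"
  have Rx: "R *v x = axis k 1" unfolding x_def by (rule orth_inv[OF orth])
  have xj: "x $ l = R$k$l" for l
    by (simp add: x_def matrix_vector_mult_basis column_def transpose_def)
  have Ry: "(R *v axis j 1) $ i = R$i$j" for i
    by (simp add: matrix_vector_mult_basis column_def)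
  have "Bf x (axis j 1) = cot (\<theta>$k) * R$k$j - cot (\<theta>'$j) * R$k$j"
  proof -
    have s1: "(\<Sum>i\<in>UNIV. cot (\<theta> $ i) * (if i = k then 1 else 0) * R $ i $ j) = cot (\<theta> $ k) * R $ k $ j"
      by (simp add: if_distrib[of "\<lambda>z. _ * z * _"] cong: if_cong)
    have s2: "(\<Sum>l\<in>UNIV. cot (\<theta>' $ l) * R $ k $ l * (if l = j then 1 else 0)) = cot (\<theta>' $ j) * R $ k $ j"
      by (simp add: if_distrib[of "\<lambda>z. _ * z"] cong: if_cong)
    show ?thesis unfolding Bf_def Rx Ry xj by (simp add: axis_def s1 s2)
  qed
  then show ?thesis using Bz[of x "axis j 1"] by simp
qed


lemma cot_inj:
  assumes "a \<in> {-(pi/2)<..pi/2}" "b \<in> {-(pi/2)<..pi/2}" "a \<noteq> 0" "b \<noteq> 0" "cot a = cot b"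
  shows "a = b"
proof -
  have sa: "sin a \<noteq> 0" by (rule angle_sin[OF assms(1,3)])
  have sb: "sin b \<noteq> 0" by (rule angle_sin[OF assms(2,4)])
  have "cos a * sin b = cos b * sin a" using assms(5) sa sb by (simp add: cot_def field_simps)
  then have "sin (b - a) = 0" by (simp add: sin_diff mult.commute)
  moreover have "\<bar>b - a\<bar> < pi" using assms(1,2) by auto
  ultimately show ?thesis using sin_zero_pi_iff by force
qed

theorem theorem3:
  fixes \<theta> :: "real^'n" and R :: "real^'n^'n"
  assumes angles: "\<forall>j. \<theta> $ j \<in> {-(pi/2)<..pi/2}"
    and orth: "orthogonal_matrix R"
    and nondec: "\<not> block_decomposable R"
    and not_equal: "\<not> (\<exists>c. \<forall>j. \<theta> $ j = c)"
  shows "\<not> (\<exists>\<theta>' L. (\<forall>j. \<theta>' $ j \<in> {-(pi/2)<..pi/2}) \<and> invertible L \<and>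
            (\<forall>m psi. test_ket psi \<longrightarrow>
               homodyne_bra \<theta> m (passive_action R psi) =
               complex_of_real (sqrt \<bar>det (matrix_inv L)\<bar>)
                 * homodyne_bra \<theta>' (matrix_inv L *v m) psi))"
proof
  assume "\<exists>\<theta>' L. (\<forall>j. \<theta>' $ j \<in> {-(pi/2)<..pi/2}) \<and> invertible L \<and>
            (\<forall>m psi. test_ket psi \<longrightarrow>
               homodyne_bra \<theta> m (passive_action R psi) =
               complex_of_real (sqrt \<bar>det (matrix_inv L)\<bar>)
                 * homodyne_bra \<theta>' (matrix_inv L *v m) psi)"
  then obtain \<theta>' L where ang': "\<forall>j. \<theta>' $ j \<in> {-(pi/2)<..pi/2}" and inv: "invertible L"
    and HH: "\<forall>m psi. test_ket psi \<longrightarrow>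
               homodyne_bra \<theta> m (passive_action R psi) =
               complex_of_real (sqrt \<bar>det (matrix_inv L)\<bar>)
                 * homodyne_bra \<theta>' (matrix_inv L *v m) psi" by blast
  define c where "c = sqrt \<bar>det (matrix_inv L)\<bar>"
  have cpos: "c > 0" using det_inv_nz[OF inv] by (simp add: c_def)
  have H: "\<forall>psi. test_ket psi \<longrightarrow> homodyne_bra \<theta> 0 (passive_action R psi) = complex_of_real c * homodyne_bra \<theta>' 0 psi"
  proof (intro allI impI)
    fix psi :: "real^'n \<Rightarrow> complex" assume tk: "test_ket psi"
    have "homodyne_bra \<theta> 0 (passive_action R psi) =
               complex_of_real (sqrt \<bar>det (matrix_inv L)\<bar>) * homodyne_bra \<theta>' (matrix_inv L *v 0) psi"
      using HH tk by blast
    then show "homodyne_bra \<theta> 0 (passive_action R psi) = complex_of_real c * homodyne_bra \<theta>' 0 psi"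
      by (simp add: c_def)
  qed
  have nA: "R$i$j = 0" if "i \<in> nz \<theta>" "j \<notin> nz \<theta>'" for i j
    using caseA[OF angles orth H that] by blast
  have nB: "R$i$j = 0" if "i \<notin> nz \<theta>" "j \<in> nz \<theta>'" for i j
    using caseB[OF ang' orth cpos H that] by blast
  have Sne: "nz \<theta> \<noteq> {}"
  proof
    assume "nz \<theta> = {}"
    then have "\<forall>j. \<theta> $ j = 0" by (auto simp: nz_def)
    with not_equal show False by blast
  qed
  show False
  proof (cases "nz \<theta> = UNIV")
    case False
    have "block_decomposable R"
      unfolding block_decomposable_def
    proof (rule exI[of _ "nz \<theta>'"], rule exI[of _ "nz \<theta>"], intro conjI allI impI)
      show "nz \<theta> \<noteq> {}" by (rule Sne)
      show "nz \<theta> \<noteq> UNIV" by (rule False)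
      show "nz \<theta>' \<noteq> {}"
      proof -
        obtain i where i: "i \<in> nz \<theta>" using Sne by blast
        obtain j where "R$i$j \<noteq> 0" using orth_row[OF orth] by blast
        then have "j \<in> nz \<theta>'" using nA[OF i] by blast
        then show ?thesis by blast
      qed
      show "nz \<theta>' \<noteq> UNIV"
      proof -
        obtain i where i: "i \<notin> nz \<theta>" using False by blast
        obtain j where "R$i$j \<noteq> 0" using orth_row[OF orth] by blast
        then have "j \<notin> nz \<theta>'" using nB[OF i] by blast
        then show ?thesis by blast
      qed
      fix i j assume "(i \<in> nz \<theta>) \<noteq> (j \<in> nz \<theta>')"
      then show "R$i$j = 0" using nA nB by blast
    qed
    with nondec show False by blast
  next
    case True
    have nz1: "\<forall>j. \<theta> $ j \<noteq> 0" using True by (auto simp: nz_def)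
    have nz2: "\<forall>j. \<theta>' $ j \<noteq> 0"
    proof
      fix j
      obtain i where "R$i$j \<noteq> 0" using orth_col[OF orth] by blast
      then have "j \<in> nz \<theta>'" using nA[of i j] True by blast
      then show "\<theta>' $ j \<noteq> 0" by (simp add: nz_def)
    qed
    have U: "cot (\<theta>$k) * R$k$j = cot (\<theta>'$j) * R$k$j" for k j
      by (rule caseU[OF angles ang' orth cpos H nz1 nz2])
    have U': "cot (\<theta>$k) = cot (\<theta>'$j)" if "R$k$j \<noteq> 0" for k j
      using U[of k j] that by simp
    obtain i0 :: 'n where True by blast
    obtain i1 where i1: "\<theta> $ i1 \<noteq> \<theta> $ i0" using not_equal by blast
    define a where "a = cot (\<theta>$i0)"
    have i1a: "cot (\<theta>$i1) \<noteq> a"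
      using cot_inj[of "\<theta>$i1" "\<theta>$i0"] angles nz1 i1 by (auto simp: a_def)
    have "block_decomposable R"
      unfolding block_decomposable_def
    proof (rule exI[of _ "{j. cot (\<theta>'$j) = a}"], rule exI[of _ "{i. cot (\<theta>$i) = a}"], intro conjI allI impI)
      show "{i. cot (\<theta>$i) = a} \<noteq> {}" by (auto simp: a_def)
      show "{i. cot (\<theta>$i) = a} \<noteq> UNIV" using i1a by blast
      show "{j. cot (\<theta>'$j) = a} \<noteq> {}"
      proof -
        obtain j where "R$i0$j \<noteq> 0" using orth_row[OF orth] by blast
        then have "cot (\<theta>'$j) = a" using U' a_def by simp
        then show ?thesis by blast
      qed
      show "{j. cot (\<theta>'$j) = a} \<noteq> UNIV"
      proof -
        obtain j where "R$i1$j \<noteq> 0" using orth_row[OF orth] by blast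
        then have "cot (\<theta>'$j) \<noteq> a" using U' i1a by metis
        then show ?thesis by blast
      qed
      fix i j assume "(i \<in> {i. cot (\<theta>$i) = a}) \<noteq> (j \<in> {j. cot (\<theta>'$j) = a})"
      then have "cot (\<theta>$i) \<noteq> cot (\<theta>'$j)" by auto
      then show "R$i$j = 0" using U' by blast
    qed
    with nondec show False by blast
  qed
qed

end
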